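(* Let $G$ be a finite simple graph with at least $3$ vertices. If $\delta(G) \ge \widetilde{\alpha}(G)$, then $G$ is Hamiltonian.
   Context: $\delta(G)$ denotes the minimum degree of $G$. For disjoint vertex sets $S,T$, $E(S,T)$ is the set of edges with one end in $S$ and one in $T$. An $(s,t)$-bipartite-hole in $G$ consists of two disjoint sets of vertices $S$ and $T$ with $|S|=s$, $|T|=t$ and $E(S,T)=\emptyset$. The bipartite-hole-number $\widetilde{\alpha}(G)$ is the least integer $r$ which can be written as $r=s+t-1$ for some positive integers $s,t$ such that $G$ contains no $(s,t)$-bipartite-hole. (Equivalently, $\widetilde{\alpha}(G)$ is the maximum integer $r$ such that $G$ contains an $(s,t)$-bipartite-hole for every pair of non-negative integers $s,t$ with $s+t=r$.) *)

theory Defs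
  imports Main
begin

definition simple_graph :: "'a set \<Rightarrow> ('a \<Rightarrow> 'a \<Rightarrow> bool) \<Rightarrow> bool" where
  "simple_graph V E \<longleftrightarrow> finite V \<and> (\<forall>u v. E u v \<longrightarrow> u \<in> V \<and> v \<in> V)
     \<and> (\<forall>u v. E u v \<longrightarrow> E v u) \<and> (\<forall>v. \<not> E v v)"

definition degree :: "'a set \<Rightarrow> ('a \<Rightarrow> 'a \<Rightarrow> bool) \<Rightarrow> 'a \<Rightarrow> nat" where
  "degree V E v = card {u \<in> V. E v u}"

definition min_degree :: "'a set \<Rightarrow> ('a \<Rightarrow> 'a \<Rightarrow> bool) \<Rightarrow> nat" where
  "min_degree V E = Min (degree V E ` V)"

definition has_bip_hole :: "'a set \<Rightarrow> ('a \<Rightarrow> 'a \<Rightarrow> bool) \<Rightarrow> nat \<Rightarrow> nat \<Rightarrow> bool" where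
  "has_bip_hole V E s t \<longleftrightarrow> (\<exists>S T. S \<subseteq> V \<and> T \<subseteq> V \<and> S \<inter> T = {} \<and>
       card S = s \<and> card T = t \<and> (\<forall>x\<in>S. \<forall>y\<in>T. \<not> E x y))"

definition bip_hole_number :: "'a set \<Rightarrow> ('a \<Rightarrow> 'a \<Rightarrow> bool) \<Rightarrow> nat" where
  "bip_hole_number V E = (LEAST r. \<exists>s t. 0 < s \<and> 0 < t \<and> r = s + t - 1 \<and> \<not> has_bip_hole V E s t)"

definition hamiltonian :: "'a set \<Rightarrow> ('a \<Rightarrow> 'a \<Rightarrow> bool) \<Rightarrow> bool" where
  "hamiltonian V E \<longleftrightarrow> (\<exists>vs. distinct vs \<and> set vs = V \<and> 3 \<le> length vs \<and>
       (\<forall>i. Suc i < length vs \<longrightarrow> E (vs ! i) (vs ! Suc i)) \<and> E (last vs) (hd vs))"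

end

theory Submission
  imports Defs
begin


definition cyc :: "'a set \<Rightarrow> ('a \<Rightarrow> 'a \<Rightarrow> bool) \<Rightarrow> 'a list \<Rightarrow> bool" where
  "cyc V E xs \<longleftrightarrow> distinct xs \<and> 3 \<le> length xs \<and> set xs \<subseteq> V \<and> successively E xs \<and> E (last xs) (hd xs)"

definition pth :: "'a set \<Rightarrow> ('a \<Rightarrow> 'a \<Rightarrow> bool) \<Rightarrow> 'a list \<Rightarrow> bool" where
  "pth V E xs \<longleftrightarrow> xs \<noteq> [] \<and> distinct xs \<and> set xs \<subseteq> V \<and> successively E xs"

lemma succ_take_drop:
  assumes "successively P xs"
  shows "successively P (take k xs)" "successively P (drop k xs)"
  using assms successively_append_iff[of P "take k xs" "drop k xs"] by auto

lemma cyc_rotate: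
  assumes "cyc V E vs" shows "cyc V E (rotate m vs)"
proof -
  let ?k = "m mod length vs"
  have ne: "vs \<noteq> []" using assms unfolding cyc_def by auto
  have r: "rotate m vs = drop ?k vs @ take ?k vs" by (rule rotate_drop_take)
  show ?thesis
  proof (cases "?k = 0")
    case True
    then show ?thesis using r assms by simp
  next
    case False
    have kl: "?k < length vs" using ne by simp
    have d: "drop ?k vs \<noteq> []" "take ?k vs \<noteq> []" using kl False by auto
    have sv: "successively E vs" and cl: "E (last vs) (hd vs)" using assms unfolding cyc_def by auto
    have sp: "successively E (take ?k vs @ drop ?k vs)" using sv by (simp only: append_take_drop_id)
    hence e1: "E (last (take ?k vs)) (hd (drop ?k vs))"
      using d unfolding successively_append_iff by blast
    have "last (drop ?k vs) = last vs" using d by (metis append_take_drop_id last_append)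
    moreover have "hd (take ?k vs) = hd vs" using d by (metis append_take_drop_id hd_append2)
    ultimately have e2: "E (last (drop ?k vs)) (hd (take ?k vs))" using cl by simp
    have "successively E (drop ?k vs @ take ?k vs)"
      using succ_take_drop[OF sv] e2 by (simp add: successively_append_iff)
    moreover have "last (drop ?k vs @ take ?k vs) = last (take ?k vs)" using d by simp
    moreover have "hd (drop ?k vs @ take ?k vs) = hd (drop ?k vs)" using d by simp
    ultimately have "successively E (rotate m vs)" "E (last (rotate m vs)) (hd (rotate m vs))"
      using e1 r by simp_all
    then show ?thesis using assms unfolding cyc_def by simp
  qed
qed

lemma rot_nth: "k < length vs \<Longrightarrow> rotate m vs ! k = vs ! ((m + k) mod length vs)"
  by (rule nth_rotate)

lemma rot_hd: "vs \<noteq> [] \<Longrightarrow> hd (rotate (Suc i) vs) = vs ! (Suc i mod length vs)"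
  by (rule hd_rotate_conv_nth)

lemma rot_last: assumes "i < length vs" shows "last (rotate (Suc i) vs) = vs ! i"
proof -
  have ne: "rotate (Suc i) vs \<noteq> []" using assms by auto
  have "last (rotate (Suc i) vs) = rotate (Suc i) vs ! (length vs - 1)"
    using ne by (simp add: last_conv_nth)
  also have "\<dots> = vs ! ((Suc i + (length vs - 1)) mod length vs)"
    using assms by (simp add: rot_nth del: rotate_Suc)
  also have "(Suc i + (length vs - 1)) = i + length vs" using assms by simp
  finally show ?thesis using assms by simp
qed

lemma modlem: "i < (n::nat) \<Longrightarrow> (Suc i + (j + n - Suc i) mod n) mod n = j mod n"
proof -
  assume "i < n"
  have "(Suc i + (j + n - Suc i) mod n) mod n = (Suc i + (j + n - Suc i)) mod n" by (rule mod_add_right_eq)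
  also have "Suc i + (j + n - Suc i) = j + n" using \<open>i<n\<close> by simp
  finally show ?thesis by simp
qed

lemma suc_mod_inj: "i < (n::nat) \<Longrightarrow> j < n \<Longrightarrow> Suc i mod n = Suc j mod n \<Longrightarrow> i = j"
proof -
  assume a: "i < n" "j < n" "Suc i mod n = Suc j mod n"
  have "Suc i mod n = (if Suc i = n then 0 else Suc i)" using a(1) by simp
  moreover have "Suc j mod n = (if Suc j = n then 0 else Suc j)" using a(2) by simp
  ultimately show ?thesis using a by (metis Suc_lessI mod_less mod_self nat.distinct(1) Suc_inject)
qed

lemma subpath_le:
  assumes "pth V E Q" "i1 \<le> i2" "i2 < length Q"
  shows "\<exists>R. pth V E R \<and> set R \<subseteq> set Q \<and> hd R = Q ! i1 \<and> last R = Q ! i2"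
proof -
  define R where "R = map (\<lambda>k. Q ! k) [i1..<Suc i2]"
  have sQ: "successively E Q" "distinct Q" "set Q \<subseteq> V" using assms unfolding pth_def by auto
  have len: "length R = Suc i2 - i1" unfolding R_def using assms(2) by simp
  have Rn: "\<And>k. k < length R \<Longrightarrow> R ! k = Q ! (i1 + k)" unfolding R_def by (simp del: upt_Suc)
  have "successively E R"
    unfolding successively_conv_nth
  proof (intro allI impI)
    fix k assume "Suc k < length R"
    then show "E (R ! k) (R ! Suc k)" using Rn[of k] Rn[of "Suc k"] len assms(3)
      successively_nth[OF sQ(1), of "i1 + k"] by simp
  qed
  moreover have "distinct R" unfolding R_def using sQ(2) assms(3)
    by (simp add: distinct_map inj_on_def nth_eq_iff_index_eq)
  moreover have "set R \<subseteq> set Q" unfolding R_def using assms(3) by auto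
  moreover have Rne: "R \<noteq> []" using len assms(2) by (metis Suc_diff_le list.size(3) nat.distinct(1))
  moreover have "hd R = Q ! i1" using Rn[of 0] Rne by (simp add: hd_conv_nth)
  moreover have "last R = Q ! i2" using Rn[of "length R - 1"] len assms Rne by (simp add: last_conv_nth)
  ultimately show ?thesis using sQ(3) unfolding pth_def by blast
qed

lemma subpath:
  assumes sym: "\<forall>u v. E u v \<longrightarrow> E v u" and Q: "pth V E Q" and z: "z1 \<in> set Q" "z2 \<in> set Q"
  shows "\<exists>R. pth V E R \<and> set R \<subseteq> set Q \<and> hd R = z1 \<and> last R = z2"
proof -
  obtain i1 where i1: "i1 < length Q" "Q ! i1 = z1" using z by (auto simp: in_set_conv_nth)
  obtain i2 where i2: "i2 < length Q" "Q ! i2 = z2" using z by (auto simp: in_set_conv_nth)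
  show ?thesis
  proof (cases "i1 \<le> i2")
    case True then show ?thesis using subpath_le[OF Q True i2(1)] i1 i2 by auto
  next
    case False
    then obtain R where R: "pth V E R" "set R \<subseteq> set Q" "hd R = z2" "last R = z1"
      using subpath_le[OF Q _ i1(1), of i2] i1 i2 by auto
    have "successively (\<lambda>x y. E y x) R" using R(1) sym unfolding pth_def
      by (metis (no_types, lifting) successively_mono)
    then have "pth V E (rev R)" using R(1) unfolding pth_def by simp
    moreover have "hd (rev R) = z1" "last (rev R) = z2" using R R(1) unfolding pth_def
      by (auto simp: hd_rev last_rev)
    ultimately show ?thesis using R(2) by (metis set_rev)
  qed
qed



lemma key2:
  assumes sym: "\<forall>u v. E u v \<longrightarrow> E v u"
  and vs: "cyc V E vs" and maxc: "\<forall>ws. cyc V E ws \<longrightarrow> length ws \<le> length vs"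
  and Q: "pth (V - set vs) E Q"
  and i: "i < length vs" and z1: "z1 \<in> set Q" "E (vs!i) z1" and z2: "z2 \<in> set Q"
  shows "\<not> E (vs ! (Suc i mod length vs)) z2"
proof
  assume e: "E (vs ! (Suc i mod length vs)) z2"
  define ws where "ws = rotate (Suc i) vs"
  have ws: "cyc V E ws" unfolding ws_def by (rule cyc_rotate[OF vs])
  have ne: "vs \<noteq> []" using i by auto
  have hw: "hd ws = vs ! (Suc i mod length vs)" unfolding ws_def by (rule rot_hd[OF ne])
  have lw: "last ws = vs ! i" unfolding ws_def by (rule rot_last[OF i])
  have sws: "set ws = set vs" "length ws = length vs" unfolding ws_def by simp_all
  obtain R where R: "pth (V - set vs) E R" "set R \<subseteq> set Q" "hd R = z1" "last R = z2"
    using subpath[OF sym Q z1(1) z2] by blast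
  have Rne: "R \<noteq> []" using R unfolding pth_def by simp
  have wne: "ws \<noteq> []" using ws unfolding cyc_def by auto
  have "cyc V E (ws @ R)"
    unfolding cyc_def
  proof (intro conjI)
    show "distinct (ws @ R)" using ws R sws unfolding cyc_def pth_def by auto
    show "3 \<le> length (ws @ R)" using ws unfolding cyc_def by simp
    show "set (ws @ R) \<subseteq> V" using ws R unfolding cyc_def pth_def by auto
    show "successively E (ws @ R)" using ws R lw z1 Rne wne unfolding cyc_def pth_def
      by (simp add: successively_append_iff)
    show "E (last (ws @ R)) (hd (ws @ R))" using e sym R(4) hw Rne wne by simp
  qed
  then have "length (ws @ R) \<le> length vs" using maxc by blast
  then show False using Rne sws by simp
qed

lemma key1:
  assumes sym: "\<forall>u v. E u v \<longrightarrow> E v u"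
  and vs: "cyc V E vs" and maxc: "\<forall>ws. cyc V E ws \<longrightarrow> length ws \<le> length vs"
  and Q: "pth (V - set vs) E Q"
  and i: "i < length vs" and j: "j < length vs" and ij: "i \<noteq> j"
  and z1: "z1 \<in> set Q" "E (vs!i) z1" and z2: "z2 \<in> set Q" "E (vs!j) z2"
  shows "\<not> E (vs ! (Suc i mod length vs)) (vs ! (Suc j mod length vs))"
proof
  assume e: "E (vs ! (Suc i mod length vs)) (vs ! (Suc j mod length vs))"
  let ?n = "length vs"
  define ws where "ws = rotate (Suc i) vs"
  have ws: "cyc V E ws" unfolding ws_def by (rule cyc_rotate[OF vs])
  have ne: "vs \<noteq> []" using i by auto
  have hw: "hd ws = vs ! (Suc i mod length vs)" unfolding ws_def by (rule rot_hd[OF ne])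
  have lw: "last ws = vs ! i" unfolding ws_def by (rule rot_last[OF i])
  have sws: "set ws = set vs" "length ws = length vs" unfolding ws_def by simp_all
  have wne: "ws \<noteq> []" using ws unfolding cyc_def by auto
  define m where "m = (j + ?n - Suc i) mod ?n"
  have m: "m < ?n" unfolding m_def using ne by simp
  have wm: "ws ! m = vs ! j" unfolding ws_def using m rot_nth[OF m, of "Suc i"] modlem[OF i, of j] j
    by (simp add: m_def del: rotate_Suc)
  have "m \<noteq> ?n - 1"
  proof
    assume "m = ?n - 1"
    then have "ws ! m = last ws" using wne sws ne by (simp add: last_conv_nth)
    then have "vs ! j = vs ! i" using wm lw by simp
    then show False using ij i j vs unfolding cyc_def by (simp add: nth_eq_iff_index_eq)
  qed
  then have sm: "Suc m < ?n" using m by simp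
  have jm: "(Suc i + m) mod ?n = j" using modlem[OF i, of j] j by (simp add: m_def)
  have "(Suc i + Suc m) mod ?n = Suc j mod ?n" using jm by (metis add_Suc_right mod_Suc_eq)
  then have wsm: "ws ! Suc m = vs ! (Suc j mod ?n)" unfolding ws_def using rot_nth[OF sm, of "Suc i"]
    by (simp del: rotate_Suc)
  define xs where "xs = take (Suc m) ws"
  define ys where "ys = drop (Suc m) ws"
  have wxy: "ws = xs @ ys" unfolding xs_def ys_def by simp
  have xne: "xs \<noteq> []" and yne: "ys \<noteq> []" unfolding xs_def ys_def using sm sws wne by auto
  have lx: "last xs = vs ! j" unfolding xs_def using sm sws wm by (simp add: take_Suc_conv_app_nth)
  have hy: "hd ys = vs ! (Suc j mod ?n)" unfolding ys_def using sm sws wsm by (simp add: hd_drop_conv_nth)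
  have hx: "hd xs = vs ! (Suc i mod ?n)" using hw wxy xne by simp
  have ly: "last ys = vs ! i" using lw wxy yne by simp
  have sxy: "successively E xs" "successively E ys" using ws unfolding xs_def ys_def cyc_def
    by (auto intro: succ_take_drop)
  have "successively (\<lambda>x y. E y x) xs" using sxy(1) sym by (metis (no_types, lifting) successively_mono)
  then have srx: "successively E (rev xs)" by simp
  have dxy: "distinct (rev xs @ ys)" "set (rev xs @ ys) = set vs"
    using ws sws wxy unfolding cyc_def by (metis distinct_append distinct_rev set_append set_rev)+
  obtain R where R: "pth (V - set vs) E R" "set R \<subseteq> set Q" "hd R = z1" "last R = z2"
    using subpath[OF sym Q z1(1) z2(1)] by blast
  have Rne: "R \<noteq> []" using R unfolding pth_def by simp
  have "cyc V E (R @ rev xs @ ys)"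
    unfolding cyc_def
  proof (intro conjI)
    show "distinct (R @ rev xs @ ys)" using dxy R unfolding pth_def by auto
    show "3 \<le> length (R @ rev xs @ ys)" using vs dxy unfolding cyc_def
      by (metis distinct_card le_add2 le_trans length_append)
    show "set (R @ rev xs @ ys) \<subseteq> V" using vs R dxy unfolding cyc_def pth_def by auto
    have "successively E (rev xs @ ys)" using srx sxy xne yne e hx hy
      by (simp add: successively_append_iff last_rev)
    moreover have "E (last R) (hd (rev xs @ ys))" using R(4) xne lx z2 sym by (simp add: hd_rev)
    ultimately show "successively E (R @ rev xs @ ys)" using R Rne unfolding pth_def
      by (simp add: successively_append_iff)
    show "E (last (R @ rev xs @ ys)) (hd (R @ rev xs @ ys))" using ly yne Rne R(3) z1 by simp
  qed
  then have "length (R @ rev xs @ ys) \<le> length vs" using maxc by blast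
  moreover have "length (rev xs @ ys) = length vs" using sws wxy by simp
  ultimately show False using Rne by simp
qed


lemma hole_mono:
  assumes "S \<subseteq> V" "T \<subseteq> V" "S \<inter> T = {}" "finite S" "finite T"
    "\<forall>x\<in>S. \<forall>y\<in>T. \<not> E x y" "p \<le> card S" "q \<le> card T"
  shows "has_bip_hole V E p q"
proof -
  obtain S' where S': "S' \<subseteq> S" "card S' = p" using obtain_subset_with_card_n[OF assms(7)] by blast
  obtain T' where T': "T' \<subseteq> T" "card T' = q" using obtain_subset_with_card_n[OF assms(8)] by blast
  have "S' \<subseteq> V \<and> T' \<subseteq> V \<and> S' \<inter> T' = {} \<and> card S' = p \<and> card T' = q \<and> (\<forall>x\<in>S'. \<forall>y\<in>T'. \<not> E x y)"
  proof (intro conjI)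
    show "S' \<subseteq> V" "T' \<subseteq> V" using assms(1,2) S'(1) T'(1) by auto
    show "S' \<inter> T' = {}" using assms(3) S'(1) T'(1) by auto
    show "card S' = p" "card T' = q" using S' T' by auto
    show "\<forall>x\<in>S'. \<forall>y\<in>T'. \<not> E x y" using assms(6) S'(1) T'(1) by (meson subsetD)
  qed
  then show ?thesis unfolding has_bip_hole_def by blast
qed

lemma hole_sym:
  assumes "simple_graph V E" "has_bip_hole V E s t" shows "has_bip_hole V E t s"
proof -
  obtain S T where h: "S \<subseteq> V" "T \<subseteq> V" "S \<inter> T = {}" "card S = s" "card T = t" "\<forall>x\<in>S. \<forall>y\<in>T. \<not> E x y"
    using assms(2) unfolding has_bip_hole_def by blast
  have sym: "\<forall>u v. E u v \<longrightarrow> E v u" using assms(1) unfolding simple_graph_def by simp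
  have "T \<subseteq> V \<and> S \<subseteq> V \<and> T \<inter> S = {} \<and> card T = t \<and> card S = s \<and> (\<forall>x\<in>T. \<forall>y\<in>S. \<not> E x y)"
  proof (intro conjI)
    show "T \<subseteq> V" "S \<subseteq> V" "card T = t" "card S = s" using h by auto
    show "T \<inter> S = {}" using h(3) by auto
    show "\<forall>x\<in>T. \<forall>y\<in>S. \<not> E x y"
    proof (intro ballI)
      fix x y assume "x \<in> T" "y \<in> S"
      then show "\<not> E x y" using h(6) sym by metis
    qed
  qed
  then show ?thesis unfolding has_bip_hole_def by blast
qed

lemma bhn:
  assumes "simple_graph V E"
  shows "\<exists>s t. 0 < s \<and> 0 < t \<and> bip_hole_number V E = s + t - 1 \<and> \<not> has_bip_hole V E s t"
proof -
  have fin: "finite V" using assms unfolding simple_graph_def by simp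
  have "\<not> has_bip_hole V E (Suc (card V)) 1"
  proof
    assume "has_bip_hole V E (Suc (card V)) 1"
    then obtain S where "S \<subseteq> V" "card S = Suc (card V)" unfolding has_bip_hole_def by blast
    then show False using card_mono[OF fin] by (metis Suc_n_not_le_n)
  qed
  moreover have "Suc (card V) = Suc (card V) + 1 - 1" by simp
  ultimately have ex: "\<exists>r. \<exists>s t. 0 < s \<and> 0 < t \<and> r = s + t - 1 \<and> \<not> has_bip_hole V E s t"
    by (intro exI[of _ "Suc (card V)"] exI[of _ "Suc (card V)"] exI[of _ 1]) simp
  have "\<exists>s t. 0 < s \<and> 0 < t \<and> (LEAST r. \<exists>s t. 0 < s \<and> 0 < t \<and> r = s + t - 1 \<and> \<not> has_bip_hole V E s t) = s + t - 1 \<and> \<not> has_bip_hole V E s t"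
    using LeastI_ex[of "\<lambda>r. \<exists>s t. 0 < s \<and> 0 < t \<and> r = s + t - 1 \<and> \<not> has_bip_hole V E s t"] ex by blast
  then show ?thesis unfolding bip_hole_number_def .
qed


lemma cycle_exists:
  assumes G: "simple_graph V E" and ne: "V \<noteq> {}" and deg: "\<forall>v\<in>V. d \<le> degree V E v" and d2: "2 \<le> d"
  shows "\<exists>vs. cyc V E vs \<and> d + 1 \<le> length vs"
proof -
  have fin: "finite V" and sym: "\<forall>u v. E u v \<longrightarrow> E v u" and inV: "\<forall>u v. E u v \<longrightarrow> u \<in> V \<and> v \<in> V"
    and irr: "\<forall>v. \<not> E v v" using G unfolding simple_graph_def by auto
  obtain v where v: "v \<in> V" using ne by blast
  have p1: "pth V E [v]" using v unfolding pth_def by simp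
  have bnd: "\<forall>y. (\<exists>P. pth V E P \<and> length P = y) \<longrightarrow> y \<le> card V"
  proof (intro allI impI)
    fix y assume "\<exists>P. pth V E P \<and> length P = y"
    then obtain P where "pth V E P" "length P = y" by blast
    then show "y \<le> card V" unfolding pth_def using card_mono[OF fin] distinct_card by metis
  qed
  have "\<exists>L. (\<exists>P. pth V E P \<and> length P = L) \<and> (\<forall>y. (\<exists>P. pth V E P \<and> length P = y) \<longrightarrow> y \<le> L)"
    by (rule Nat.ex_has_greatest_nat[of "\<lambda>y. \<exists>P. pth V E P \<and> length P = y" 1 "card V"])
       (use p1 bnd in auto)
  then obtain L where L: "\<exists>P. pth V E P \<and> length P = L" "\<forall>y. (\<exists>P. pth V E P \<and> length P = y) \<longrightarrow> y \<le> L"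
    by blast
  then obtain P where P: "pth V E P" "length P = L" by blast
  define y where "y = hd P"
  have Pne: "P \<noteq> []" using P unfolding pth_def by simp
  have yV: "y \<in> V" using P Pne unfolding pth_def y_def by auto
  have nb: "\<forall>u. E y u \<longrightarrow> u \<in> set P"
  proof (intro allI impI, rule ccontr)
    fix u assume e: "E y u" "u \<notin> set P"
    have "pth V E (u # P)" using P e inV sym Pne unfolding pth_def y_def by (auto simp: successively_Cons)
    then have "length (u # P) \<le> L" using L by blast
    then show False using P by simp
  qed
  define J where "J = {j. j < length P \<and> E y (P ! j)}"
  have finJ: "finite J" unfolding J_def by simp
  have dy: "d \<le> card {u \<in> V. E y u}" using deg yV unfolding degree_def by simp
  then have "card {u \<in> V. E y u} > 0" using d2 by simp
  then have "{u \<in> V. E y u} \<noteq> {}" by (metis card.empty less_irrefl)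
  then obtain u where u: "u \<in> V" "E y u" by blast
  then obtain j where "j < length P" "P ! j = u" using nb by (metis in_set_conv_nth)
  then have Jne: "J \<noteq> {}" using u unfolding J_def by auto
  define j0 where "j0 = Max J"
  have j0J: "j0 \<in> J" unfolding j0_def using finJ Jne by simp
  have jle: "\<forall>j\<in>J. j \<le> j0" unfolding j0_def using finJ by simp
  have y0: "P ! 0 = y" unfolding y_def using Pne by (simp add: hd_conv_nth)
  have sub: "{u \<in> V. E y u} \<subseteq> (\<lambda>k. P ! k) ` {1..j0}"
  proof
    fix w assume w: "w \<in> {u \<in> V. E y u}"
    then obtain k where k: "k < length P" "P ! k = w" using nb by (metis (no_types, lifting) in_set_conv_nth mem_Collect_eq)
    then have "k \<in> J" using w unfolding J_def by simp
    moreover have "k \<noteq> 0" proof assume "k = 0" then show False using k y0 w irr by auto qed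
    ultimately show "w \<in> (\<lambda>k. P ! k) ` {1..j0}" using jle k by force
  qed
  have "card {u \<in> V. E y u} \<le> j0"
    using card_mono[OF _ sub] card_image_le[of "{1..j0}" "\<lambda>k. P ! k"] by simp
  then have dj: "d \<le> j0" using dy by simp
  define ws where "ws = take (Suc j0) P"
  have j0l: "j0 < length P" using j0J unfolding J_def by simp
  have lws: "length ws = Suc j0" unfolding ws_def using j0l by simp
  have "cyc V E ws" unfolding cyc_def
  proof (intro conjI)
    show "distinct ws" unfolding ws_def using P unfolding pth_def by simp
    show "3 \<le> length ws" using lws dj d2 by simp
    show "set ws \<subseteq> V" unfolding ws_def using P unfolding pth_def by (meson order.trans set_take_subset)
    show "successively E ws" unfolding ws_def using P unfolding pth_def by (simp add: succ_take_drop)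
    have "last ws = P ! j0" unfolding ws_def using j0l by (simp add: take_Suc_conv_app_nth)
    moreover have "hd ws = y" unfolding ws_def using y0 Pne lws by (simp add: hd_conv_nth y_def)
    ultimately show "E (last ws) (hd ws)" using j0J sym unfolding J_def by simp
  qed
  then show ?thesis using lws dj by auto
qed



theorem theorem2:
  fixes V :: "'a set" and E :: "'a \<Rightarrow> 'a \<Rightarrow> bool"
  assumes "simple_graph V E"
    and "card V \<ge> 3"
    and "min_degree V E \<ge> bip_hole_number V E"
  shows "hamiltonian V E"
proof -
  note G = assms(1)
  have fin: "finite V" and sym: "\<forall>u v. E u v \<longrightarrow> E v u" and inV: "\<forall>u v. E u v \<longrightarrow> u \<in> V \<and> v \<in> V"
    and irr: "\<forall>v. \<not> E v v" using G unfolding simple_graph_def by auto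
  have Vne: "V \<noteq> {}" using assms(2) by auto
  define r where "r = bip_hole_number V E"
  define \<delta> where "\<delta> = min_degree V E"
  have rd: "r \<le> \<delta>" using assms(3) unfolding r_def \<delta>_def by simp
  have deg: "\<forall>v\<in>V. \<delta> \<le> degree V E v" unfolding \<delta>_def min_degree_def using fin by simp
  have \<delta>in: "\<delta> \<in> degree V E ` V" unfolding \<delta>_def min_degree_def using fin Vne by simp
  obtain s0 t0 where st: "0 < s0" "0 < t0" "r = s0 + t0 - 1" "\<not> has_bip_hole V E s0 t0"
    using bhn[OF G] unfolding r_def by blast
  define p where "p = min s0 t0"
  define q where "q = max s0 t0"
  have nh: "\<not> has_bip_hole V E p q"
  proof (cases "s0 \<le> t0")
    case True then show ?thesis using st(4) unfolding p_def q_def by simp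
  next
    case False then show ?thesis using st(4) hole_sym[OF G, of t0 s0] unfolding p_def q_def by auto
  qed
  have pq: "0 < p" "p \<le> q" "p + q = r + 1" using st unfolding p_def q_def by auto
  have d2: "2 \<le> \<delta>"
  proof (cases "2 \<le> r")
    case True then show ?thesis using rd by simp
  next
    case False
    then have p1: "p = 1" "q = 1" using pq by auto
    have "\<forall>v\<in>V. 2 \<le> degree V E v"
    proof
      fix v assume v: "v \<in> V"
      have "V - {v} \<subseteq> {u \<in> V. E v u}"
      proof
        fix u assume u: "u \<in> V - {v}"
        show "u \<in> {u \<in> V. E v u}"
        proof (rule ccontr)
          assume "u \<notin> {u \<in> V. E v u}"
          then have "\<not> E v u" using u by simp
          then have "has_bip_hole V E 1 1" unfolding has_bip_hole_def
            by (intro exI[of _ "{v}"] exI[of _ "{u}"]) (use u v in auto)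
          then show False using nh p1 by simp
        qed
      qed
      then have "card (V - {v}) \<le> card {u \<in> V. E v u}" using fin by (intro card_mono) auto
      moreover have "card (V - {v}) = card V - 1" using v fin by simp
      ultimately show "2 \<le> degree V E v" unfolding degree_def using assms(2) by simp
    qed
    then show ?thesis using \<delta>in by auto
  qed
  obtain c0 where c0: "cyc V E c0" "\<delta> + 1 \<le> length c0" using cycle_exists[OF G Vne deg d2] by blast
  have cbnd: "\<forall>y. (\<exists>ws. cyc V E ws \<and> length ws = y) \<longrightarrow> y \<le> card V"
  proof (intro allI impI)
    fix y assume "\<exists>ws. cyc V E ws \<and> length ws = y"
    then obtain ws where "cyc V E ws" "length ws = y" by blast
    then show "y \<le> card V" unfolding cyc_def using card_mono[OF fin] distinct_card by metis
  qed
  have "\<exists>L. (\<exists>ws. cyc V E ws \<and> length ws = L) \<and> (\<forall>y. (\<exists>ws. cyc V E ws \<and> length ws = y) \<longrightarrow> y \<le> L)"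
    by (rule Nat.ex_has_greatest_nat[of "\<lambda>y. \<exists>ws. cyc V E ws \<and> length ws = y" "length c0" "card V"])
       (use c0 cbnd in auto)
  then obtain vs where vs: "cyc V E vs" and maxc: "\<forall>ws. cyc V E ws \<longrightarrow> length ws \<le> length vs"
    by blast
  define n where "n = length vs"
  have nd: "\<delta> + 1 \<le> n" using maxc c0 unfolding n_def by force
  have vsV: "set vs \<subseteq> V" and dvs: "distinct vs" using vs unfolding cyc_def by auto
  show ?thesis
  proof (cases "set vs = V")
    case True
    then show ?thesis using vs unfolding hamiltonian_def cyc_def successively_conv_nth by blast
  next
    case False
    then obtain x where x: "x \<in> V - set vs" using vsV by blast
    have p1: "pth (V - set vs) E [x]" using x unfolding pth_def by simp
    have bnd: "\<forall>y. (\<exists>P. pth (V - set vs) E P \<and> length P = y) \<longrightarrow> y \<le> card V"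
    proof (intro allI impI)
      fix y assume "\<exists>P. pth (V - set vs) E P \<and> length P = y"
      then obtain P where P: "pth (V - set vs) E P" "length P = y" by blast
      then have "set P \<subseteq> V" "distinct P" unfolding pth_def by auto
      then show "y \<le> card V" using P(2) card_mono[OF fin] distinct_card by metis
    qed
    have "\<exists>L. (\<exists>P. pth (V - set vs) E P \<and> length P = L) \<and> (\<forall>y. (\<exists>P. pth (V - set vs) E P \<and> length P = y) \<longrightarrow> y \<le> L)"
      by (rule Nat.ex_has_greatest_nat[of "\<lambda>y. \<exists>P. pth (V - set vs) E P \<and> length P = y" 1 "card V"])
         (use p1 bnd in auto)
    then obtain L where L: "\<exists>P. pth (V - set vs) E P \<and> length P = L"
      "\<forall>y. (\<exists>P. pth (V - set vs) E P \<and> length P = y) \<longrightarrow> y \<le> L" by blast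
    then obtain Q where Q: "pth (V - set vs) E Q" "length Q = L" by blast
    have Qne: "Q \<noteq> []" and dQ: "distinct Q" and QV: "set Q \<subseteq> V - set vs" using Q unfolding pth_def by auto
    define y where "y = hd Q"
    have yQ: "y \<in> set Q" unfolding y_def using Qne by simp
    have nb: "\<forall>u. E y u \<longrightarrow> u \<in> set vs \<or> u \<in> set Q"
    proof (intro allI impI, rule ccontr)
      fix u assume e: "E y u" "\<not> (u \<in> set vs \<or> u \<in> set Q)"
      have "pth (V - set vs) E (u # Q)" using Q e inV sym Qne unfolding pth_def y_def
        by (auto simp: successively_Cons)
      then have "length (u # Q) \<le> L" using L by blast
      then show False using Q by simp
    qed
    define N where "N = {i. i < n \<and> (\<exists>z\<in>set Q. E (vs ! i) z)}"
    define k where "k = card N"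
    define Np where "Np = (\<lambda>i. vs ! (Suc i mod n)) ` N"
    have Nn: "N \<subseteq> {..<n}" unfolding N_def by auto
    have finN: "finite N" using Nn finite_subset by blast
    have npos: "0 < n" using nd by simp
    have injNp: "inj_on (\<lambda>i. vs ! (Suc i mod n)) N"
    proof
      fix i j assume ij: "i \<in> N" "j \<in> N" "vs ! (Suc i mod n) = vs ! (Suc j mod n)"
      then have "Suc i mod n = Suc j mod n" using dvs npos unfolding n_def
        by (simp add: nth_eq_iff_index_eq)
      then show "i = j" using ij Nn suc_mod_inj by blast
    qed
    have cNp: "card Np = k" unfolding Np_def k_def using card_image[OF injNp] .
    have injN: "inj_on (\<lambda>i. vs ! i) N"
    proof
      fix i j assume "i \<in> N" "j \<in> N" "vs ! i = vs ! j"
      then show "i = j" using dvs Nn unfolding n_def by (meson lessThan_iff nth_eq_iff_index_eq subsetD)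
    qed
    have cN: "card ((\<lambda>i. vs ! i) ` N) = k" unfolding k_def using card_image[OF injN] .
    have NpC: "Np \<subseteq> set vs" unfolding Np_def using npos unfolding n_def by auto
    have NC: "(\<lambda>i. vs ! i) ` N \<subseteq> set vs" using Nn unfolding n_def by auto
    have sub: "{u \<in> V. E y u} \<subseteq> (\<lambda>i. vs ! i) ` N \<union> (set Q - {y})"
    proof
      fix u assume u: "u \<in> {u \<in> V. E y u}"
      show "u \<in> (\<lambda>i. vs ! i) ` N \<union> (set Q - {y})"
      proof (cases "u \<in> set vs")
        case True
        then obtain i where i: "i < n" "vs ! i = u" unfolding n_def by (metis in_set_conv_nth)
        then have "i \<in> N" unfolding N_def using u yQ sym by auto
        then show ?thesis using i by auto
      next
        case False
        then show ?thesis using u nb irr by auto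
      qed
    qed
    have "card {u \<in> V. E y u} \<le> card ((\<lambda>i. vs ! i) ` N \<union> (set Q - {y}))"
      by (rule card_mono[OF _ sub]) (use finN in simp)
    also have "\<dots> \<le> card ((\<lambda>i. vs ! i) ` N) + card (set Q - {y})" by (rule card_Un_le)
    also have "card (set Q - {y}) = length Q - 1" using yQ dQ by (simp add: distinct_card)
    finally have "\<delta> \<le> k + (length Q - 1)" using deg cN QV yQ unfolding degree_def by force
    then have kQ: "r + 1 \<le> k + length Q" using rd Qne by (cases Q) auto
    show ?thesis
    proof (cases "p \<le> k")
      case True
      then obtain S where S: "S \<subseteq> Np" "card S = p" using cNp obtain_subset_with_card_n by metis
      define T where "T = (Np - S) \<union> set Q"
      have finNp: "finite Np" unfolding Np_def using finN by simp
      have dj: "(Np - S) \<inter> set Q = {}" using NpC QV by auto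
      have "card T = card (Np - S) + card (set Q)" unfolding T_def
        using card_Un_disjoint[OF _ _ dj] finNp by simp
      also have "card (Np - S) = k - p" using card_Diff_subset[OF _ S(1)] finNp S cNp
        by (metis finite_subset)
      finally have cT: "q \<le> card T" using kQ pq True dQ distinct_card[OF dQ] by simp
      have noE: "\<forall>a\<in>S. \<forall>b\<in>T. \<not> E a b"
      proof (intro ballI)
        fix a b assume a: "a \<in> S" and b: "b \<in> T"
        obtain i where i: "i \<in> N" "a = vs ! (Suc i mod n)" using a S unfolding Np_def by auto
        obtain z1 where z1: "z1 \<in> set Q" "E (vs ! i) z1" "i < n" using i unfolding N_def by auto
        show "\<not> E a b"
        proof (cases "b \<in> set Q")
          case True
          then show ?thesis using key2[OF sym vs maxc Q(1) _ z1(1,2) True] z1 i unfolding n_def by simp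
        next
          case False
          then have bb: "b \<in> Np - S" using b unfolding T_def by auto
          then obtain j where j: "j \<in> N" "b = vs ! (Suc j mod n)" unfolding Np_def by auto
          obtain z2 where z2: "z2 \<in> set Q" "E (vs ! j) z2" "j < n" using j unfolding N_def by auto
          have "i \<noteq> j" using a bb i j by auto
          then show ?thesis using key1[OF sym vs maxc Q(1) _ _ _ z1(1,2) z2(1,2)] z1 z2 i j
            unfolding n_def by simp
        qed
      qed
      have "has_bip_hole V E p q"
        by (rule hole_mono[OF _ _ _ _ _ noE]) (use S NpC vsV T_def QV finNp cT dj in \<open>auto intro: finite_subset\<close>)
      then show ?thesis using nh by simp
    next
      case False
      define T where "T = set vs - (\<lambda>i. vs ! i) ` N"
      have cT: "card T = n - k" unfolding T_def using card_Diff_subset[OF _ NC] cN finN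
        unfolding n_def by (simp add: distinct_card[OF dvs])
      have "q \<le> card T" using cT nd rd pq False by simp
      moreover have "p \<le> card (set Q)" using kQ pq False distinct_card[OF dQ] by simp
      moreover have noE: "\<forall>a\<in>set Q. \<forall>b\<in>T. \<not> E a b"
      proof (intro ballI notI)
        fix a b assume a: "a \<in> set Q" and b: "b \<in> T" and e: "E a b"
        then obtain i where i: "i < n" "vs ! i = b" unfolding T_def n_def by (metis DiffD1 in_set_conv_nth)
        then have "i \<in> N" unfolding N_def using a e sym by auto
        then show False using b i unfolding T_def by auto
      qed
      ultimately have "has_bip_hole V E p q"
        by (intro hole_mono[OF _ _ _ _ _ noE]) (use QV vsV in \<open>auto simp: T_def\<close>)
      then show ?thesis using nh by simp
    qed
  qed
qed


end
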